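(* (a) For every word $r\in\{0,1\}^*$, $V([r0]_F)\geq V([r]_F)$. (b) For all integers $k\geq 0$ and all words $r'\in\{0,1\}^*$, $V([r'10^{2k+1}]_F)=V([r'10^{2k}]_F)$.
   Context: Fibonacci numbers: $F_0=0$, $F_1=1$, $F_{m+2}=F_{m+1}+F_m$. For a word $k_m\cdots k_0$ of nonnegative integer digits (in particular a word over $\{0,1\}$), $[k_m\cdots k_0]_F=\sum_{i=0}^m k_iF_{i+2}$; $0^j$ denotes $j$ copies of the digit $0$ and juxtaposition is concatenation. Standard Fibonacci words: $f_{-1}=b$, $f_0=a$, $f_{m+1}=f_mf_{m-1}$. The Fibonacci word ${\bf f}=\lim f_m$, with prefix of length $j$ denoted ${\bf f}(0..j]$. $V(N)$ is the number of factorizations of ${\bf f}(0..N]$ as $f_m^{k_m}f_{m-1}^{k_{m-1}}\cdots f_0^{k_0}$ with all $k_i\geq 0$ (i.e. into standard words $f_i$, $i\ge 0$, in non-strictly decreasing order of index), counted up to leading zero exponents; $V(0)=1$. *)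

theory Defs
  imports Main "HOL-Number_Theory.Fib"
begin

datatype letter = La | Lb

text \<open>sw n is the standard word f_{n-1}: sw 0 = f_{-1} = b, sw 1 = f_0 = a,
  f_{m+1} = f_m f_{m-1}.\<close>
fun sw :: "nat \<Rightarrow> letter list" where
  "sw 0 = [Lb]"
| "sw (Suc 0) = [La]"
| "sw (Suc (Suc n)) = sw (Suc n) @ sw n"

definition fw :: "nat \<Rightarrow> letter list" where
  "fw m = sw (Suc m)"

text \<open>The infinite Fibonacci word as the limit of f_m: its i-th letter (0-based)
  is the i-th letter of f_i (each f_m is a prefix of f_{m+1} and |f_i| > i).\<close>
definition fibword :: "nat \<Rightarrow> letter" where
  "fibword i = fw i ! i"

definition fib_prefix :: "nat \<Rightarrow> letter list" where
  "fib_prefix N = map fibword [0..<N]"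

text \<open>Value [k_m ... k_0]_F = sum k_i F_{i+2}; list written most significant digit first.\<close>
definition fibval :: "nat list \<Rightarrow> nat" where
  "fibval ds = (\<Sum>i<length ds. rev ds ! i * fib (i + 2))"

text \<open>The word f_m^{k_m} ... f_0^{k_0} for exponent list ks with ks ! i = k_i.\<close>
definition fact_word :: "nat list \<Rightarrow> letter list" where
  "fact_word ks = concat (map (\<lambda>i. concat (replicate (ks ! i) (fw i))) (rev [0..<length ks]))"

text \<open>Factorizations counted up to leading zero exponents: exponent lists with
  nonzero top exponent (the empty list for the empty factorization).\<close>
definition V :: "nat \<Rightarrow> nat" where
  "V N = card {ks. (ks = [] \<or> last ks \<noteq> 0) \<and> fact_word ks = fib_prefix N}"

end

theory Submission
  imports Defs
begin

fun phim :: "letter \<Rightarrow> letter list" where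
  "phim La = [La, Lb]"
| "phim Lb = [La]"

definition phi :: "letter list \<Rightarrow> letter list" where
  "phi w = concat (map phim w)"

lemma phi_Nil[simp]: "phi [] = []" by (simp add: phi_def)
lemma phi_Cons[simp]: "phi (x # w) = phim x @ phi w" by (simp add: phi_def)
lemma phi_append[simp]: "phi (u @ v) = phi u @ phi v" by (simp add: phi_def)
lemma phi_concat: "phi (concat ws) = concat (map phi ws)"
  by (induction ws) auto
lemma phi_concat_rep: "phi (concat (replicate k u)) = concat (replicate k (phi u))"
  by (induction k) auto

lemma phim_hd: "\<exists>t. phim c = La # t"
  by (cases c) auto

lemma phi_sw: "phi (sw n) = sw (Suc n)"
  by (induction n rule: sw.induct) auto

lemma phi_fw: "phi (fw n) = fw (Suc n)"
  by (simp add: fw_def phi_sw)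

lemma phi_nonempty: "w \<noteq> [] \<Longrightarrow> \<exists>t. phi w = La # t"
  by (cases w) (auto, metis phim_hd append_Cons)

lemma phi_inj: "phi u = phi v \<Longrightarrow> u = v"
proof (induction u arbitrary: v)
  case Nil
  then show ?case using phi_nonempty[of v] by auto
next
  case (Cons x u)
  obtain y v' where v: "v = y # v'"
    using Cons.prems phi_nonempty[of "x # u"] by (cases v) auto
  have h: "phim x @ phi u = phim y @ phi v'" using Cons.prems v by simp
  show ?case
  proof (cases x)
    case La
    show ?thesis
    proof (cases y)
      case La then show ?thesis using h v \<open>x = La\<close> Cons.IH by auto
    next
      case Lb
      then have "Lb # phi u = phi v'" using h \<open>x = La\<close> by simp
      then show ?thesis using phi_nonempty[of v'] by (cases "v' = []") auto
    qed
  next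
    case Lb
    show ?thesis
    proof (cases y)
      case Lb then show ?thesis using h v \<open>x = Lb\<close> Cons.IH by auto
    next
      case La
      then have "phi u = Lb # phi v'" using h \<open>x = Lb\<close> by simp
      then show ?thesis using phi_nonempty[of u] by (cases "u = []") auto
    qed
  qed
qed

lemma length_sw: "length (sw n) = fib (Suc n)"
  by (induction n rule: sw.induct) (auto simp: fib_plus_2 [simplified])

lemma length_fw: "length (fw n) = fib (n + 2)"
  by (simp add: fw_def length_sw)

lemma fib_ge: "n \<le> fib (Suc n)"
proof (induction n rule: fib.induct)
  case 1 then show ?case by simp
next
  case 2 then show ?case by simp
next
  case (3 n)
  have "fib (Suc n) \<ge> 1" using fib_neq_0_nat[of "Suc n"] by simp
  then show ?case using 3 by simp
qed

lemma fw_long: "n < length (fw n)"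
  using fib_ge[of "Suc n"] by (simp add: length_fw)

lemma fw_mono: "m \<le> n \<Longrightarrow> \<exists>v. fw n = fw m @ v"
proof (induction n)
  case 0 then show ?case by simp
next
  case (Suc n)
  show ?case
  proof (cases "m = Suc n")
    case True then show ?thesis by simp
  next
    case False
    then obtain v where "fw n = fw m @ v" using Suc by auto
    moreover have "fw (Suc n) = fw n @ sw n" by (simp add: fw_def)
    ultimately show ?thesis by auto
  qed
qed

definition pref :: "letter list \<Rightarrow> bool" where
  "pref w \<longleftrightarrow> (\<exists>n v. fw n = w @ v)"

lemma pref_prefix: "pref w \<Longrightarrow> fib_prefix (length w) = w"
proof -
  assume "pref w"
  then obtain n v where nv: "fw n = w @ v" by (auto simp: pref_def)
  show ?thesis
  proof (rule nth_equalityI)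
    show "length (fib_prefix (length w)) = length w" by (simp add: fib_prefix_def)
    fix i assume "i < length (fib_prefix (length w))"
    then have i: "i < length w" by (simp add: fib_prefix_def)
    obtain u1 where u1: "fw (max i n) = fw i @ u1" using fw_mono[of i "max i n"] by auto
    obtain u2 where u2: "fw (max i n) = fw n @ u2" using fw_mono[of n "max i n"] by auto
    have "fw (max i n) ! i = fw i ! i" using u1 fw_long[of i] by (simp add: nth_append)
    moreover have "fw (max i n) ! i = w ! i" using u2 nv i by (simp add: nth_append)
    ultimately show "fib_prefix (length w) ! i = w ! i"
      using i by (simp add: fib_prefix_def fibword_def)
  qed
qed

lemma pref_ext: "pref w \<Longrightarrow> \<exists>n c v. fw n = w @ c # v"
proof -
  assume "pref w"
  then obtain n v where nv: "fw n = w @ v" by (auto simp: pref_def)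
  obtain u where u: "fw (max n (length w)) = fw n @ u" using fw_mono[of n "max n (length w)"] by auto
  have "length w < length (fw (max n (length w)))" using fw_long[of "max n (length w)"] by simp
  then have "v @ u \<noteq> []" using u nv by auto
  then obtain c v' where "v @ u = c # v'" by (cases "v @ u") auto
  then show ?thesis using u nv by (metis append.assoc)
qed

lemma pref_phi_a: "pref w \<Longrightarrow> pref (phi w @ [La])"
proof -
  assume "pref w"
  then obtain n c v where "fw n = w @ c # v" using pref_ext by blast
  then have "fw (Suc n) = phi w @ phim c @ phi v" using phi_fw[of n] by simp
  moreover obtain t where "phim c = La # t" using phim_hd by blast
  ultimately show ?thesis unfolding pref_def by (metis append.assoc append_Cons append_Nil)
qed

lemma pref_app: "pref (w @ u) \<Longrightarrow> pref w"
  unfolding pref_def by (metis append.assoc)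

lemma concat_rep_a: "concat (replicate e [x]) = replicate e x"
  by (induction e) auto

lemma fact_word_Cons: "fact_word (e # ks) = phi (fact_word ks) @ replicate e La"
proof -
  have r: "rev [0..<length (e # ks)] = rev (map Suc [0..<length ks]) @ [0]"
    by (simp add: upt_conv_Cons map_Suc_upt del: upt_Suc)
  have "fact_word (e # ks) = concat (map (\<lambda>i. concat (replicate ((e # ks) ! i) (fw i))) (rev (map Suc [0..<length ks]))) @ concat (replicate e (fw 0))"
    unfolding fact_word_def r by simp
  also have "concat (map (\<lambda>i. concat (replicate ((e # ks) ! i) (fw i))) (rev (map Suc [0..<length ks])))
     = concat (map (\<lambda>i. concat (replicate (ks ! i) (fw (Suc i)))) (rev [0..<length ks]))"
    by (simp add: rev_map o_def)
  also have "\<dots> = phi (fact_word ks)"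
    by (simp add: fact_word_def phi_concat phi_concat_rep phi_fw o_def)
  also have "concat (replicate e (fw 0)) = replicate e La"
    by (simp add: fw_def concat_rep_a)
  finally show ?thesis .
qed

lemma fact_word_Nil[simp]: "fact_word [] = []" by (simp add: fact_word_def)

lemma length_concat_rep: "length (concat (replicate k u)) = k * length u"
  by (induction k) auto

lemma length_fact_word: "length (fact_word ks) = (\<Sum>i<length ks. ks ! i * fib (i + 2))"
proof -
  have "length (fact_word ks) = sum_list (map (\<lambda>i. ks ! i * fib (i + 2)) (rev [0..<length ks]))"
    by (simp add: fact_word_def length_concat length_concat_rep length_fw o_def sum_list_replicate del: fib_plus_2 fib.simps)
  also have "\<dots> = sum_list (map (\<lambda>i. ks ! i * fib (i + 2)) [0..<length ks])"
    by (simp add: rev_map[symmetric] sum_list_rev del: rev_map)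
  also have "\<dots> = (\<Sum>i<length ks. ks ! i * fib (i + 2))"
    by (simp add: sum_set_upt_conv_sum_list_nat[symmetric] atLeast0LessThan)
  finally show ?thesis .
qed

lemma fibval_rev: "fibval (rev ks) = length (fact_word ks)"
  by (simp add: fibval_def length_fact_word)

lemma pref_Nil: "pref []"
  unfolding pref_def by auto

lemma pref_fact: "set ks \<subseteq> {0, 1} \<Longrightarrow> pref (fact_word ks)"
proof (induction ks)
  case Nil then show ?case by (simp add: pref_Nil)
next
  case (Cons e ks)
  then have p: "pref (fact_word ks)" and e: "e = 0 \<or> e = 1" by auto
  have p2: "pref (phi (fact_word ks) @ [La])" using pref_phi_a[OF p] .
  show ?case
  proof (cases "e = 0")
    case True then show ?thesis using p2 pref_app by (simp add: fact_word_Cons)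
  next
    case False then have "e = 1" using e by simp
    then show ?thesis using p2 by (simp add: fact_word_Cons)
  qed
qed

definition S :: "letter list \<Rightarrow> nat list set" where
  "S w = {ks. (ks = [] \<or> last ks \<noteq> 0) \<and> fact_word ks = w}"

lemma V_eq: "set r \<subseteq> {0, 1} \<Longrightarrow> V (fibval r) = card (S (fact_word (rev r)))"
proof -
  assume "set r \<subseteq> {0, 1}"
  then have "pref (fact_word (rev r))" by (intro pref_fact) auto
  then have "fib_prefix (fibval r) = fact_word (rev r)"
    using pref_prefix fibval_rev[of "rev r"] by simp
  then show ?thesis by (simp add: V_def S_def)
qed

lemma S_bound:
  assumes "ks \<in> S w"
  shows "set ks \<subseteq> {..length w} \<and> length ks \<le> length w"
proof -
  have fw: "fact_word ks = w" and nz: "ks = [] \<or> last ks \<noteq> 0" using assms by (auto simp: S_def)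
  have le: "ks ! i * fib (i + 2) \<le> length w" if "i < length ks" for i
    using that fw length_fact_word[of ks]
    by (metis (no_types, lifting) finite_lessThan lessThan_iff member_le_sum zero_le)
  have "ks ! i \<le> length w" if "i < length ks" for i
  proof -
    have "fib (i + 2) \<ge> 1" using fib_neq_0_nat[of "i+2"] by linarith
    then have "ks ! i \<le> ks ! i * fib (i + 2)" by simp
    then show ?thesis using le[OF that] by linarith
  qed
  then have "set ks \<subseteq> {..length w}" by (auto simp: in_set_conv_nth)
  moreover have "length ks \<le> length w"
  proof (cases "ks = []")
    case False
    define i where "i = length ks - 1"
    have i: "i < length ks" using False by (simp add: i_def)
    have "ks ! i \<noteq> 0" using nz False by (simp add: i_def last_conv_nth)
    then have "fib (i + 2) \<le> ks ! i * fib (i + 2)" by simp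
    moreover have "i + 1 \<le> fib (i + 2)" using fib_ge[of "i+1"] by simp
    ultimately show ?thesis using le[OF i] i_def i by linarith
  qed simp
  ultimately show ?thesis by simp
qed

lemma S_finite: "finite (S w)"
proof -
  have "S w \<subseteq> {xs. set xs \<subseteq> {..length w} \<and> length xs \<le> length w}"
    using S_bound by blast
  moreover have "finite {xs. set xs \<subseteq> {..length w} \<and> length xs \<le> length w}"
    by (rule finite_lists_length_le) simp
  ultimately show ?thesis by (rule finite_subset)
qed

lemma S_mono: "card (S w) \<le> card (S (phi w))"
proof -
  define g :: "nat list \<Rightarrow> nat list" where "g ks = (if ks = [] then [] else 0 # ks)" for ks
  have "inj_on g (S w)" unfolding inj_on_def g_def by auto
  moreover have "g ` S w \<subseteq> S (phi w)"
    by (auto simp: g_def S_def fact_word_Cons)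
  ultimately show ?thesis using S_finite by (rule card_inj_on_le)
qed

lemma S_eq:
  assumes "w \<noteq> []" "last w = La"
  shows "card (S (phi w)) = card (S w)"
proof -
  have wd: "w = butlast w @ [La]" using assms append_butlast_last_id[of w] by simp
  have lastphi: "last (phi w) = Lb" by (subst wd, simp)
  have "S (phi w) = Cons 0 ` S w"
  proof
    show "Cons 0 ` S w \<subseteq> S (phi w)"
    proof
      fix x assume "x \<in> Cons 0 ` S w"
      then obtain ks where ks: "ks \<in> S w" "x = 0 # ks" by auto
      then have "ks \<noteq> []" using assms(1) by (auto simp: S_def)
      then show "x \<in> S (phi w)" using ks by (auto simp: S_def fact_word_Cons)
    qed
  next
    show "S (phi w) \<subseteq> Cons 0 ` S w"
    proof
      fix ks assume ks: "ks \<in> S (phi w)"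
      have pn: "phi w \<noteq> []" using phi_nonempty[OF assms(1)] by auto
      then have "ks \<noteq> []" using ks by (auto simp: S_def)
      then obtain e ks' where ke: "ks = e # ks'" by (cases ks) auto
      have eq: "phi (fact_word ks') @ replicate e La = phi w" using ks ke by (simp add: S_def fact_word_Cons)
      have "e = 0"
      proof (rule ccontr)
        assume "e \<noteq> 0"
        then have "last (phi (fact_word ks') @ replicate e La) = La" by simp
        then show False using eq lastphi by simp
      qed
      then have "fact_word ks' = w" using eq phi_inj by simp
      moreover have "ks' \<noteq> []" using ks ke \<open>e = 0\<close> by (auto simp: S_def)
      ultimately have "ks' \<in> S w" using ks ke by (auto simp: S_def)
      then show "ks \<in> Cons 0 ` S w" using ke \<open>e = 0\<close> by auto
    qed
  qed
  then show ?thesis by (simp add: card_image)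
qed

lemma last_even:
  "fact_word (replicate (2 * k) 0 @ 1 # ks) \<noteq> [] \<and> last (fact_word (replicate (2 * k) 0 @ 1 # ks)) = La"
proof (induction k)
  case 0 then show ?case by (simp add: fact_word_Cons)
next
  case (Suc k)
  define w where "w = fact_word (replicate (2 * k) 0 @ 1 # ks)"
  have wd: "w = butlast w @ [La]" using Suc w_def append_butlast_last_id[of w] by simp
  have "replicate (2 * Suc k) 0 @ 1 # ks = 0 # 0 # (replicate (2 * k) 0 @ 1 # ks)" by simp
  then have "fact_word (replicate (2 * Suc k) 0 @ 1 # ks) = phi (phi w)"
    by (simp add: fact_word_Cons w_def)
  also have "\<dots> = phi (phi (butlast w)) @ [La, Lb, La]" by (subst wd, simp)
  finally show ?case by simp
qed

theorem proposition2:
  shows "(\<forall>r::nat list. set r \<subseteq> {0, 1} \<longrightarrow> V (fibval (r @ [0])) \<ge> V (fibval r))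
    \<and> (\<forall>(k::nat) (r'::nat list). set r' \<subseteq> {0, 1} \<longrightarrow>
          V (fibval (r' @ [1] @ replicate (2 * k + 1) 0)) = V (fibval (r' @ [1] @ replicate (2 * k) 0)))"
proof (intro conjI allI impI)
  fix r :: "nat list" assume r: "set r \<subseteq> {0, 1}"
  have "V (fibval (r @ [0])) = card (S (phi (fact_word (rev r))))"
    using V_eq[of "r @ [0]"] r by (simp add: fact_word_Cons)
  moreover have "V (fibval r) = card (S (fact_word (rev r)))" using V_eq r by simp
  ultimately show "V (fibval (r @ [0])) \<ge> V (fibval r)" using S_mono by simp
next
  fix k :: nat and r' :: "nat list" assume r': "set r' \<subseteq> {0, 1}"
  define r where "r = r' @ [1] @ replicate (2 * k) 0"
  have r: "set r \<subseteq> {0, 1}" using r' by (auto simp: r_def)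
  have e: "r' @ [1] @ replicate (2 * k + 1) 0 = r @ [0]"
    by (simp add: r_def replicate_append_same[symmetric])
  have rv: "rev r = replicate (2 * k) 0 @ 1 # rev r'" by (simp add: r_def)
  have w: "fact_word (rev r) \<noteq> [] \<and> last (fact_word (rev r)) = La"
    unfolding rv by (rule last_even)
  have "V (fibval (r @ [0])) = card (S (phi (fact_word (rev r))))"
    using V_eq[of "r @ [0]"] r by (simp add: fact_word_Cons)
  also have "\<dots> = card (S (fact_word (rev r)))" using S_eq w by blast
  also have "\<dots> = V (fibval r)" using V_eq r by simp
  finally show "V (fibval (r' @ [1] @ replicate (2 * k + 1) 0)) = V (fibval (r' @ [1] @ replicate (2 * k) 0))"
    unfolding e r_def by simp
qed

end
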